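(* Let $n,m\ge1$ and let $p=p_{n,m}$ be stable of degree $n$ in $z$ and $m$ in $w$. Define $$L(z,w;\eta)=z^n\,\frac{p(z,w)\overline{p(1/\bar z,\eta)}-\tilde p(z,w)\overline{\tilde p(1/\bar z,\eta)}}{1-w\bar\eta}.$$ Then: (1) $L$ is a polynomial in $(z,w,\bar\eta)$, of degree at most $2n$ in $z$, at most $m-1$ in $w$ and at most $m-1$ in $\bar\eta$; (2) as $\eta$ ranges over $\mathbb{C}$, the polynomials $L(\cdot,\cdot;\eta)$ span a vector space of dimension exactly $m$; (3) $L(z,w;\eta)=z^{2n}(w\bar\eta)^{m-1}\overline{L(1/\bar z,1/\bar w;1/\bar\eta)}$; consequently, writing $L(z,w;\eta)=\sum_{j=0}^{m-1}a_j(z,w)\bar\eta^j$, one has $a_k(z,w)=z^{2n}w^{m-1}\overline{a_{m-k-1}(1/\bar z,1/\bar w)}$ for $0\le k\le m-1$; (4) there are polynomials $A(z,w;\eta)$, $B(z,w;\eta)$ in $(z,w,\bar\eta)$, of degree at most $n$ in $z$, at most $m-1$ in $w$ and at most $m-1$ in $\bar\eta$, such that $L=p\,A+\tilde p\,B$.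
   Context: A polynomial $p\in\mathbb{C}[z,w]$ is stable if $p(z,w)\neq0$ whenever $|z|\le1,|w|\le1$. The reflection is $\tilde p(z,w)=z^nw^m\overline{p(1/\bar z,1/\bar w)}$. Here $\eta\in\mathbb{C}$ is a parameter and the expression for $L$ is understood as a rational function in $z,w,\bar\eta$. *)

theory Defs
  imports Complex_Main "HOL-Library.Function_Algebras"
begin

definition bpoly :: "(nat \<Rightarrow> nat \<Rightarrow> complex) \<Rightarrow> nat \<Rightarrow> nat \<Rightarrow> complex \<Rightarrow> complex \<Rightarrow> complex" where
  "bpoly c n m z w = (\<Sum>i\<le>n. \<Sum>j\<le>m. c i j * z ^ i * w ^ j)"

text \<open>Reflection z^n w^m conj(p(1/conj z, 1/conj w)), written out coefficientwise
  (so that it is a polynomial defined everywhere).\<close>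
definition brefl :: "(nat \<Rightarrow> nat \<Rightarrow> complex) \<Rightarrow> nat \<Rightarrow> nat \<Rightarrow> complex \<Rightarrow> complex \<Rightarrow> complex" where
  "brefl c n m z w = (\<Sum>i\<le>n. \<Sum>j\<le>m. cnj (c i j) * z ^ (n - i) * w ^ (m - j))"

definition has_bidegree :: "(nat \<Rightarrow> nat \<Rightarrow> complex) \<Rightarrow> nat \<Rightarrow> nat \<Rightarrow> bool" where
  "has_bidegree c n m \<longleftrightarrow> (\<exists>j\<le>m. c n j \<noteq> 0) \<and> (\<exists>i\<le>n. c i m \<noteq> 0)"

definition stable :: "(nat \<Rightarrow> nat \<Rightarrow> complex) \<Rightarrow> nat \<Rightarrow> nat \<Rightarrow> bool" where
  "stable c n m \<longleftrightarrow> (\<forall>z w. cmod z \<le> 1 \<longrightarrow> cmod w \<le> 1 \<longrightarrow> bpoly c n m z w \<noteq> 0)"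

definition Lfun :: "(nat \<Rightarrow> nat \<Rightarrow> complex) \<Rightarrow> nat \<Rightarrow> nat \<Rightarrow> complex \<Rightarrow> complex \<Rightarrow> complex \<Rightarrow> complex" where
  "Lfun c n m z w \<eta> = z ^ n *
     (bpoly c n m z w * cnj (bpoly c n m (1 / cnj z) \<eta>)
      - brefl c n m z w * cnj (brefl c n m (1 / cnj z) \<eta>)) / (1 - w * cnj \<eta>)"

text \<open>Trivariate polynomial in (z,w,e) with degree bounds a,b,d; e plays the role of conj eta.\<close>
definition tpoly :: "(nat \<Rightarrow> nat \<Rightarrow> nat \<Rightarrow> complex) \<Rightarrow> nat \<Rightarrow> nat \<Rightarrow> nat \<Rightarrow> complex \<Rightarrow> complex \<Rightarrow> complex \<Rightarrow> complex" where
  "tpoly l a b d z w e = (\<Sum>i\<le>a. \<Sum>j\<le>b. \<Sum>k\<le>d. l i j k * z ^ i * w ^ j * e ^ k)"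

definition tcoeff :: "(nat \<Rightarrow> nat \<Rightarrow> nat \<Rightarrow> complex) \<Rightarrow> nat \<Rightarrow> nat \<Rightarrow> nat \<Rightarrow> complex \<Rightarrow> complex \<Rightarrow> complex" where
  "tcoeff l a b k z w = (\<Sum>i\<le>a. \<Sum>j\<le>b. l i j k * z ^ i * w ^ j)"

definition fscale :: "complex \<Rightarrow> ('a \<Rightarrow> complex) \<Rightarrow> ('a \<Rightarrow> complex)" where
  "fscale a f = (\<lambda>x. a * f x)"

end

theory Submission imports Defs "HOL-Computational_Algebra.Computational_Algebra" "HOL-Computational_Algebra.Field_as_Ring" begin

definition tp :: "nat \<Rightarrow> nat \<Rightarrow> nat \<Rightarrow> (complex \<Rightarrow> complex \<Rightarrow> complex \<Rightarrow> complex) \<Rightarrow> bool" where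
  "tp a b d F \<longleftrightarrow> (\<exists>l. \<forall>z w e. F z w e = tpoly l a b d z w e)"

lemma sum_if_const: "(\<Sum>x\<in>A. if P then f x else 0) = (if P then sum f A else 0)"
  by simp

lemma tp_monom:
  assumes "i \<le> a" "j \<le> b" "k \<le> d"
  shows "tp a b d (\<lambda>z w e. z^i * w^j * e^k)"
  unfolding tp_def tpoly_def
proof (rule exI[of _ "\<lambda>i' j' k'. if i'=i then (if j'=j then (if k'=k then 1 else 0) else 0) else 0"], intro allI)
  fix z w e :: complex
  show "z ^ i * w ^ j * e ^ k = (\<Sum>i'\<le>a. \<Sum>j'\<le>b. \<Sum>k'\<le>d.
     (if i'=i then (if j'=j then (if k'=k then 1 else 0) else 0) else 0) * z ^ i' * w ^ j' * e ^ k')"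
    using assms by (simp add: if_distrib[where f="\<lambda>x. x * _"] sum_if_const cong: if_cong)
qed

lemma tp_zero: "tp a b d (\<lambda>z w e. 0)"
  unfolding tp_def tpoly_def by (rule exI[of _ "\<lambda>_ _ _. 0"]) simp

lemma tp_add: "tp a b d F \<Longrightarrow> tp a b d G \<Longrightarrow> tp a b d (\<lambda>z w e. F z w e + G z w e)"
  unfolding tp_def tpoly_def
  apply (elim exE)
  subgoal for l1 l2
    by (rule exI[of _ "\<lambda>i j k. l1 i j k + l2 i j k"]) (simp add: distrib_right sum.distrib)
  done

lemma tp_cmult: "tp a b d F \<Longrightarrow> tp a b d (\<lambda>z w e. c * F z w e)"
  unfolding tp_def tpoly_def
  apply (elim exE)
  subgoal for l
    by (rule exI[of _ "\<lambda>i j k. c * l i j k"]) (simp add: sum_distrib_left mult.assoc)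
  done

lemma tp_sum: "finite S \<Longrightarrow> (\<And>x. x \<in> S \<Longrightarrow> tp a b d (F x)) \<Longrightarrow> tp a b d (\<lambda>z w e. \<Sum>x\<in>S. F x z w e)"
proof (induction S rule: finite_induct)
  case empty then show ?case by (simp add: tp_zero)
next
  case (insert x S) then show ?case by (simp add: tp_add)
qed

lemma tp_ext: "tp a b d F \<Longrightarrow> (\<And>z w e. G z w e = F z w e) \<Longrightarrow> tp a b d G"
  unfolding tp_def by simp

definition Qs :: "(nat \<Rightarrow> nat \<Rightarrow> complex) \<Rightarrow> nat \<Rightarrow> nat \<Rightarrow> complex \<Rightarrow> complex \<Rightarrow> complex" where
  "Qs c n m z e = (\<Sum>i\<le>n. \<Sum>j\<le>m. cnj (c i j) * z^(n-i) * e^j)"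
definition Ps :: "(nat \<Rightarrow> nat \<Rightarrow> complex) \<Rightarrow> nat \<Rightarrow> nat \<Rightarrow> complex \<Rightarrow> complex \<Rightarrow> complex" where
  "Ps c n m z e = (\<Sum>i\<le>n. \<Sum>j\<le>m. c i j * z^i * e^(m-j))"
definition Nt :: "(nat \<Rightarrow> nat \<Rightarrow> complex) \<Rightarrow> nat \<Rightarrow> nat \<Rightarrow> complex \<Rightarrow> complex \<Rightarrow> complex \<Rightarrow> complex" where
  "Nt c n m z w e = (\<Sum>i\<le>n. \<Sum>j\<le>m. \<Sum>i'\<le>n. \<Sum>j'\<le>m.
      c i j * cnj (c i' j') * z^(n - i' + i) * (w^j * e^j' - w^(m-j') * e^(m-j)))"
definition Dt :: "nat \<Rightarrow> nat \<Rightarrow> nat \<Rightarrow> complex \<Rightarrow> complex \<Rightarrow> complex" where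
  "Dt m j j' w e = (if j + j' \<le> m then (\<Sum>r<m-j-j'. w^(j+r)*e^(j'+r))
      else - (\<Sum>r<j+j'-m. w^(m-j'+r)*e^(m-j+r)))"
definition Ff :: "(nat \<Rightarrow> nat \<Rightarrow> complex) \<Rightarrow> nat \<Rightarrow> nat \<Rightarrow> complex \<Rightarrow> complex \<Rightarrow> complex \<Rightarrow> complex" where
  "Ff c n m z w e = (\<Sum>i\<le>n. \<Sum>j\<le>m. \<Sum>i'\<le>n. \<Sum>j'\<le>m.
      c i j * cnj (c i' j') * z^(n - i' + i) * Dt m j j' w e)"

lemma sum4_swap: "(\<Sum>a\<in>A. \<Sum>b\<in>B. \<Sum>c\<in>C. \<Sum>d\<in>D. f c d a b) = (\<Sum>c\<in>C. \<Sum>d\<in>D. \<Sum>a\<in>A. \<Sum>b\<in>B. f c d a b)"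
proof -
  have "(\<Sum>a\<in>A. \<Sum>b\<in>B. \<Sum>c\<in>C. \<Sum>d\<in>D. f c d a b) = (\<Sum>a\<in>A. \<Sum>c\<in>C. \<Sum>b\<in>B. \<Sum>d\<in>D. f c d a b)"
    by (rule sum.cong[OF refl], rule sum.swap)
  also have "\<dots> = (\<Sum>c\<in>C. \<Sum>a\<in>A. \<Sum>b\<in>B. \<Sum>d\<in>D. f c d a b)" by (rule sum.swap)
  also have "\<dots> = (\<Sum>c\<in>C. \<Sum>a\<in>A. \<Sum>d\<in>D. \<Sum>b\<in>B. f c d a b)"
    by (intro sum.cong refl, rule sum.swap)
  also have "\<dots> = (\<Sum>c\<in>C. \<Sum>d\<in>D. \<Sum>a\<in>A. \<Sum>b\<in>B. f c d a b)"
    by (rule sum.cong[OF refl], rule sum.swap)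
  finally show ?thesis .
qed

lemma N_eq: "bpoly c n m z w * Qs c n m z e - brefl c n m z w * Ps c n m z e = Nt c n m z w e"
proof -
  have 1: "bpoly c n m z w * Qs c n m z e = (\<Sum>i\<le>n. \<Sum>j\<le>m. \<Sum>i'\<le>n. \<Sum>j'\<le>m.
      c i j * cnj (c i' j') * z^(n - i' + i) * (w^j * e^j'))"
    unfolding bpoly_def sum_distrib_right
    apply (intro sum.cong refl)
    unfolding Qs_def sum_distrib_left
    apply (intro sum.cong refl)
    unfolding power_add by (simp add: mult_ac)
  have "brefl c n m z w * Ps c n m z e = (\<Sum>i'\<le>n. \<Sum>j'\<le>m. \<Sum>i\<le>n. \<Sum>j\<le>m.
      c i j * cnj (c i' j') * z^(n - i' + i) * (w^(m-j') * e^(m-j)))"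
    unfolding brefl_def sum_distrib_right
    apply (intro sum.cong refl)
    unfolding Ps_def sum_distrib_left
    apply (intro sum.cong refl)
    unfolding power_add by (simp add: mult_ac)
  also have "\<dots> = (\<Sum>i\<le>n. \<Sum>j\<le>m. \<Sum>i'\<le>n. \<Sum>j'\<le>m.
      c i j * cnj (c i' j') * z^(n - i' + i) * (w^(m-j') * e^(m-j)))"
    by (rule sum4_swap)
  finally show ?thesis using 1 unfolding Nt_def
    by (simp add: sum_subtractf right_diff_distrib)
qed

lemma D_id:
  assumes "j \<le> m" "j' \<le> m"
  shows "(1 - w*e) * Dt m j j' w e = w^j*e^j' - w^(m-j')*e^(m-j)"
proof (cases "j + j' \<le> m")
  case True
  define t where "t = m - j - j'"
  have "(\<Sum>r<t. w^(j+r)*e^(j'+r)) = w^j*e^j' * (\<Sum>r<t. (w*e)^r)"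
    by (simp add: sum_distrib_left power_add power_mult_distrib mult_ac)
  then have "(1 - w*e) * Dt m j j' w e = w^j*e^j' * (1 - (w*e)^t)"
    using True by (simp add: Dt_def t_def one_diff_power_eq mult_ac)
  also have "\<dots> = w^j*e^j' - w^(j+t)*e^(j'+t)"
    by (simp add: algebra_simps power_add power_mult_distrib)
  finally have *: "(1 - w*e) * Dt m j j' w e = w^j*e^j' - w^(j+t)*e^(j'+t)" .
  have "j + t = m - j'" "j' + t = m - j" using True by (auto simp: t_def)
  with * show ?thesis by simp
next
  case False
  define t where "t = j + j' - m"
  have "(\<Sum>r<t. w^(m-j'+r)*e^(m-j+r)) = w^(m-j')*e^(m-j) * (\<Sum>r<t. (w*e)^r)"
    by (simp add: sum_distrib_left power_add power_mult_distrib mult_ac)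
  then have "(1 - w*e) * Dt m j j' w e = - (w^(m-j')*e^(m-j) * (1 - (w*e)^t))"
    using False by (simp add: Dt_def t_def one_diff_power_eq mult_ac)
  also have "\<dots> = w^(m-j'+t)*e^(m-j+t) - w^(m-j')*e^(m-j)"
    by (simp add: algebra_simps power_add power_mult_distrib)
  finally have *: "(1 - w*e) * Dt m j j' w e = w^(m-j'+t)*e^(m-j+t) - w^(m-j')*e^(m-j)" .
  have "m - j' + t = j" "m - j + t = j'" using False assms by (auto simp: t_def)
  with * show ?thesis by simp
qed

lemma FN: "(1 - w*e) * Ff c n m z w e = Nt c n m z w e"
  unfolding Ff_def Nt_def sum_distrib_left
  apply (intro sum.cong refl)
  apply (subst mult.left_commute)
  apply (subst D_id) by auto

lemma zpow_inv: "z \<noteq> 0 \<Longrightarrow> i \<le> n \<Longrightarrow> z^n * (1/z)^i = (z::complex)^(n-i)"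
  by (simp add: power_diff power_one_over)

lemma Qs_eq: "z \<noteq> 0 \<Longrightarrow> z^n * cnj (bpoly c n m (1 / cnj z) \<eta>) = Qs c n m z (cnj \<eta>)"
  unfolding bpoly_def Qs_def
  by (simp add: sum_distrib_left zpow_inv[symmetric] mult_ac power_one_over)

lemma Ps_eq: assumes "z \<noteq> 0" shows "z^n * cnj (brefl c n m (1 / cnj z) \<eta>) = Ps c n m z (cnj \<eta>)"
proof -
  have "cnj (brefl c n m (1 / cnj z) \<eta>) = (\<Sum>i\<le>n. \<Sum>j\<le>m. c i j * (1/z)^(n-i) * cnj \<eta>^(m-j))"
    unfolding brefl_def by simp
  then have "z^n * cnj (brefl c n m (1 / cnj z) \<eta>) = (\<Sum>i\<le>n. \<Sum>j\<le>m. c i j * (z^n * (1/z)^(n-i)) * cnj \<eta>^(m-j))"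
    by (simp add: sum_distrib_left mult_ac)
  also have "\<dots> = Ps c n m z (cnj \<eta>)"
    unfolding Ps_def
    apply (intro sum.cong refl)
    using zpow_inv[OF assms, of "n - _" n] by auto
  finally show ?thesis .
qed

lemma L_eq: assumes "z \<noteq> 0" "w * cnj \<eta> \<noteq> 1"
  shows "Lfun c n m z w \<eta> = Ff c n m z w (cnj \<eta>)"
proof -
  have "z ^ n * (bpoly c n m z w * cnj (bpoly c n m (1 / cnj z) \<eta>) - brefl c n m z w * cnj (brefl c n m (1 / cnj z) \<eta>))
     = bpoly c n m z w * (z^n * cnj (bpoly c n m (1 / cnj z) \<eta>)) - brefl c n m z w * (z^n * cnj (brefl c n m (1 / cnj z) \<eta>))"
    by (simp add: algebra_simps)
  also have "\<dots> = Nt c n m z w (cnj \<eta>)"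
    unfolding Qs_eq[OF assms(1)] Ps_eq[OF assms(1)] N_eq ..
  finally have "Lfun c n m z w \<eta> = Nt c n m z w (cnj \<eta>) / (1 - w * cnj \<eta>)"
    unfolding Lfun_def by simp
  also have "\<dots> = Ff c n m z w (cnj \<eta>)"
    using FN[of w "cnj \<eta>" c n m z] assms(2) by (simp add: field_simps)
  finally show ?thesis .
qed


lemma tp_termD:
  assumes "x \<le> a" "j \<le> m" "j' \<le> m"
  shows "tp a (m-1) (m-1) (\<lambda>z w e. k * z^x * Dt m j j' w e)"
proof (cases "j + j' \<le> m")
  case True
  have "tp a (m-1) (m-1) (\<lambda>z w e. \<Sum>r\<in>{..<m-j-j'}. k * (z^x * w^(j+r) * e^(j'+r)))"
    by (rule tp_sum) (use assms in \<open>auto intro!: tp_cmult tp_monom\<close>)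
  then show ?thesis
    by (rule tp_ext) (use True in \<open>simp add: Dt_def sum_distrib_left mult_ac\<close>)
next
  case False
  have "tp a (m-1) (m-1) (\<lambda>z w e. \<Sum>r\<in>{..<j+j'-m}. (-k) * (z^x * w^(m-j'+r) * e^(m-j+r)))"
    apply (rule tp_sum, simp) apply (rule tp_cmult) apply (rule tp_monom) using assms by auto
  then show ?thesis
    by (rule tp_ext) (use False in \<open>simp add: Dt_def sum_distrib_left mult_ac sum_negf\<close>)
qed

lemma tp_Ff: "tp (2*n) (m-1) (m-1) (Ff c n m)"
proof -
  have "tp (2*n) (m-1) (m-1) (\<lambda>z w e. \<Sum>i\<in>{..n}. \<Sum>j\<in>{..m}. \<Sum>i'\<in>{..n}. \<Sum>j'\<in>{..m}.
      (c i j * cnj (c i' j')) * z^(n - i' + i) * Dt m j j' w e)"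
    by (intro tp_sum tp_termD finite_atMost) auto
  then show ?thesis by (rule tp_ext) (simp add: Ff_def)
qed

definition Af :: "(nat \<Rightarrow> nat \<Rightarrow> complex) \<Rightarrow> nat \<Rightarrow> nat \<Rightarrow> complex \<Rightarrow> complex \<Rightarrow> complex \<Rightarrow> complex" where
  "Af c n m z w e = (\<Sum>i\<le>n. \<Sum>j\<le>m. \<Sum>r<m-j. cnj (c i j) * (z^(n-i) * w^r * e^(j+r)))"
definition Bf :: "(nat \<Rightarrow> nat \<Rightarrow> complex) \<Rightarrow> nat \<Rightarrow> nat \<Rightarrow> complex \<Rightarrow> complex \<Rightarrow> complex \<Rightarrow> complex" where
  "Bf c n m z w e = (\<Sum>i\<le>n. \<Sum>j\<le>m. \<Sum>r<j. (- c i j) * (z^i * w^r * e^(m-j+r)))"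

lemma tp_Af: "tp n (m-1) (m-1) (Af c n m)"
proof -
  have "tp n (m-1) (m-1) (\<lambda>z w e. \<Sum>i\<in>{..n}. \<Sum>j\<in>{..m}. \<Sum>r\<in>{..<m-j}. cnj (c i j) * (z^(n-i) * w^r * e^(j+r)))"
    by (intro tp_sum tp_cmult tp_monom finite_atMost finite_lessThan) auto
  then show ?thesis by (rule tp_ext) (simp add: Af_def)
qed

lemma tp_Bf: "tp n (m-1) (m-1) (Bf c n m)"
proof -
  have "tp n (m-1) (m-1) (\<lambda>z w e. \<Sum>i\<in>{..n}. \<Sum>j\<in>{..m}. \<Sum>r\<in>{..<j}. (- c i j) * (z^i * w^r * e^(m-j+r)))"
    by (intro tp_sum tp_cmult tp_monom finite_atMost finite_lessThan) auto
  then show ?thesis by (rule tp_ext) (simp add: Bf_def)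
qed

lemma Af_id: "(1 - w*e) * Af c n m z w e = Qs c n m z e - e^m * brefl c n m z w"
proof -
  have "(1 - w*e) * Af c n m z w e = (\<Sum>i\<le>n. \<Sum>j\<le>m. cnj (c i j) * z^(n-i) * ((1 - w*e) * (e^j * (\<Sum>r<m-j. (w*e)^r))))"
    unfolding Af_def sum_distrib_left
    by (intro sum.cong refl) (simp add: power_add power_mult_distrib mult_ac)
  also have "\<dots> = (\<Sum>i\<le>n. \<Sum>j\<le>m. cnj (c i j) * z^(n-i) * (e^j - w^(m-j) * e^m))"
  proof (intro sum.cong refl)
    fix i j assume "j \<in> {..m}"
    then have "e^j * (w*e)^(m-j) = w^(m-j)*e^m"
      by (simp add: power_mult_distrib power_add[symmetric] mult_ac)
    have "(1 - w*e) * (e^j * (\<Sum>r<m-j. (w*e)^r)) = e^j * ((1 - w*e) * (\<Sum>r<m-j. (w*e)^r))"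
      by (rule mult.left_commute)
    also have "\<dots> = e^j * (1 - (w*e)^(m-j))" by (simp only: one_diff_power_eq)
    also have "\<dots> = e^j - w^(m-j) * e^m" using \<open>e^j * (w*e)^(m-j) = w^(m-j)*e^m\<close> by (simp add: right_diff_distrib)
    finally show "cnj (c i j) * z^(n-i) * ((1 - w*e) * (e^j * (\<Sum>r<m-j. (w*e)^r))) = cnj (c i j) * z^(n-i) * (e^j - w^(m-j) * e^m)"
      by simp
  qed
  also have "\<dots> = Qs c n m z e - e^m * brefl c n m z w"
    unfolding Qs_def brefl_def sum_distrib_left sum_subtractf[symmetric]
    by (intro sum.cong refl) (simp add: algebra_simps)
  finally show ?thesis .
qed

lemma Bf_id: "(1 - w*e) * Bf c n m z w e = e^m * bpoly c n m z w - Ps c n m z e"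
proof -
  have "(1 - w*e) * Bf c n m z w e = (\<Sum>i\<le>n. \<Sum>j\<le>m. (- c i j) * z^i * ((1 - w*e) * (e^(m-j) * (\<Sum>r<j. (w*e)^r))))"
    unfolding Bf_def sum_distrib_left power_add
    by (intro sum.cong refl) (simp add: power_add power_mult_distrib mult_ac)
  also have "\<dots> = (\<Sum>i\<le>n. \<Sum>j\<le>m. (- c i j) * z^i * (e^(m-j) - w^j * e^m))"
  proof (intro sum.cong refl)
    fix i j assume "j \<in> {..m}"
    then have "e^(m-j) * (w*e)^j = w^j*e^m"
      by (simp add: power_mult_distrib power_add[symmetric] mult_ac)
    have "(1 - w*e) * (e^(m-j) * (\<Sum>r<j. (w*e)^r)) = e^(m-j) * ((1 - w*e) * (\<Sum>r<j. (w*e)^r))"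
      by (rule mult.left_commute)
    also have "\<dots> = e^(m-j) * (1 - (w*e)^j)" by (simp only: one_diff_power_eq)
    also have "\<dots> = e^(m-j) - w^j * e^m" using \<open>e^(m-j) * (w*e)^j = w^j*e^m\<close> by (simp add: right_diff_distrib)
    finally show "(- c i j) * z^i * ((1 - w*e) * (e^(m-j) * (\<Sum>r<j. (w*e)^r))) = (- c i j) * z^i * (e^(m-j) - w^j * e^m)"
      by simp
  qed
  also have "\<dots> = e^m * bpoly c n m z w - Ps c n m z e"
    unfolding Ps_def bpoly_def sum_distrib_left sum_subtractf[symmetric]
    by (intro sum.cong refl) (simp add: algebra_simps)
  finally show ?thesis .
qed

lemma zero_ext:
  fixes f :: "complex \<Rightarrow> complex"
  assumes "isCont f a" "\<forall>\<^sub>F w in at a. f w = 0"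
  shows "f a = 0"
proof -
  have "(f \<longlongrightarrow> f a) (at a)" using assms(1) by (simp add: isCont_def)
  moreover have "(f \<longlongrightarrow> 0) (at a)" by (rule tendsto_eventually[OF assms(2)])
  ultimately show ?thesis using tendsto_unique[OF at_neq_bot] by blast
qed

lemma cont_Dt: "isCont (\<lambda>x. Dt m j j' x e) a"
proof (cases "j + j' \<le> m")
  case True
  then have "(\<lambda>x. Dt m j j' x e) = (\<lambda>x. \<Sum>r<m-j-j'. x^(j+r)*e^(j'+r))" by (simp add: Dt_def fun_eq_iff)
  then show ?thesis by (simp only:) (intro continuous_intros)
next
  case False
  then have "(\<lambda>x. Dt m j j' x e) = (\<lambda>x. - (\<Sum>r<j+j'-m. x^(m-j'+r)*e^(m-j+r)))" by (simp add: Dt_def fun_eq_iff)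
  then show ?thesis by (simp only:) (intro continuous_intros)
qed

lemma cont_Ff_w: "isCont (\<lambda>x. Ff c n m z x e) a"
  unfolding Ff_def by (intro continuous_intros cont_Dt)

lemma PAQB: "Ff c n m z w e = bpoly c n m z w * Af c n m z w e + brefl c n m z w * Bf c n m z w e"
proof -
  have key: "Ff c n m z w e - (bpoly c n m z w * Af c n m z w e + brefl c n m z w * Bf c n m z w e) = 0"
    if "w * e \<noteq> 1" for w
  proof -
    have "(1 - w*e) * (Ff c n m z w e - (bpoly c n m z w * Af c n m z w e + brefl c n m z w * Bf c n m z w e))
       = (1 - w*e) * Ff c n m z w e - bpoly c n m z w * ((1 - w*e) * Af c n m z w e) - brefl c n m z w * ((1 - w*e) * Bf c n m z w e)"
      by (simp add: algebra_simps)
    also have "\<dots> = Nt c n m z w e - bpoly c n m z w * (Qs c n m z e - e^m * brefl c n m z w) - brefl c n m z w * (e^m * bpoly c n m z w - Ps c n m z e)"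
      by (simp only: FN Af_id Bf_id)
    also have "\<dots> = 0"
      unfolding N_eq[symmetric] by (simp add: algebra_simps)
    finally have "(1 - w*e) * (Ff c n m z w e - (bpoly c n m z w * Af c n m z w e + brefl c n m z w * Bf c n m z w e)) = 0" .
    then show ?thesis using that by simp
  qed
  show ?thesis
  proof (cases "w * e = 1")
    case False then show ?thesis using key by simp
  next
    case True
    let ?g = "\<lambda>w. Ff c n m z w e - (bpoly c n m z w * Af c n m z w e + brefl c n m z w * Bf c n m z w e)"
    have ne: "x * e \<noteq> 1" if "x \<noteq> w" for x
    proof
      assume "x * e = 1"
      with True have "x * e = w * e" by simp
      moreover have "e \<noteq> 0" using True by auto
      ultimately show False using that by simp
    qed
    have "isCont ?g w"
      unfolding bpoly_def Af_def brefl_def Bf_def by (intro continuous_intros cont_Ff_w)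
    moreover have "\<forall>\<^sub>F x in at w. ?g x = 0"
      unfolding eventually_at_filter
      by (rule always_eventually) (use key ne in auto)
    ultimately have "?g w = 0" by (rule zero_ext)
    then show ?thesis by simp
  qed
qed


lemma N_term_sym:
  fixes z w e :: complex
  assumes z: "z \<noteq> 0" and w: "w \<noteq> 0" and e: "e \<noteq> 0" and ii: "i \<le> n" "i' \<le> n" and jj: "j \<le> m" "j' \<le> m"
  shows "z^(2*n) * (w*e)^m * cnj (c i j * cnj (c i' j') * (1/cnj z)^(n - i' + i) *
           ((1/cnj w)^j * (1/cnj e)^j' - (1/cnj w)^(m-j') * (1/cnj e)^(m-j)))
       = - (c i' j' * cnj (c i j) * z^(n - i + i') * (w^j' * e^j - w^(m-j) * e^(m-j')))"
proof -
  have "z^(2*n) * (w*e)^m * cnj (c i j * cnj (c i' j') * (1/cnj z)^(n - i' + i) *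
           ((1/cnj w)^j * (1/cnj e)^j' - (1/cnj w)^(m-j') * (1/cnj e)^(m-j)))
      = cnj (c i j) * c i' j' * (z^(2*n) * (1/z)^(n - i' + i)) *
          ((w^m * (1/w)^j) * (e^m * (1/e)^j') - (w^m * (1/w)^(m-j')) * (e^m * (1/e)^(m-j)))"
    by (simp add: algebra_simps power_mult_distrib)
  also have "z^(2*n) * (1/z)^(n - i' + i) = z^(n - i + i')"
    using zpow_inv[OF z, of "n - i' + i" "2*n"] ii by (simp add: algebra_simps)
  also have "w^m * (1/w)^j = w^(m-j)" using zpow_inv[OF w, of j m] jj by simp
  also have "e^m * (1/e)^j' = e^(m-j')" using zpow_inv[OF e, of j' m] jj by simp
  also have "w^m * (1/w)^(m-j') = w^j'" using zpow_inv[OF w, of "m-j'" m] jj by simp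
  also have "e^m * (1/e)^(m-j) = e^j" using zpow_inv[OF e, of "m-j" m] jj by simp
  finally show ?thesis by (simp add: algebra_simps)
qed

lemma N_sym:
  fixes z w e :: complex
  assumes z: "z \<noteq> 0" and w: "w \<noteq> 0" and e: "e \<noteq> 0"
  shows "z^(2*n) * (w*e)^m * cnj (Nt c n m (1/cnj z) (1/cnj w) (1/cnj e)) = - Nt c n m z w e"
proof -
  have "z^(2*n) * (w*e)^m * cnj (Nt c n m (1/cnj z) (1/cnj w) (1/cnj e)) =
     (\<Sum>i\<le>n. \<Sum>j\<le>m. \<Sum>i'\<le>n. \<Sum>j'\<le>m.
        - (c i' j' * cnj (c i j) * z^(n - i + i') * (w^j' * e^j - w^(m-j) * e^(m-j'))))"
    unfolding Nt_def cnj_sum sum_distrib_left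
    by (intro sum.cong refl N_term_sym[OF z w e]) auto
  also have "\<dots> = (\<Sum>i'\<le>n. \<Sum>j'\<le>m. \<Sum>i\<le>n. \<Sum>j\<le>m.
        - (c i' j' * cnj (c i j) * z^(n - i + i') * (w^j' * e^j - w^(m-j) * e^(m-j'))))"
    by (rule sum4_swap)
  also have "\<dots> = - Nt c n m z w e"
    unfolding Nt_def by (simp add: sum_negf)
  finally show ?thesis .
qed

lemma F_sym_gen:
  fixes z w e :: complex
  assumes z: "z \<noteq> 0" and w: "w \<noteq> 0" and e: "e \<noteq> 0" and we: "w * e \<noteq> 1" and m: "m \<ge> 1"
  shows "Ff c n m z w e = z^(2*n) * (w*e)^(m-1) * cnj (Ff c n m (1/cnj z) (1/cnj w) (1/cnj e))"
proof -
  have we1: "(1/cnj w) * (1/cnj e) = 1 / cnj (w*e)" by simp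
  have "cnj (w*e) \<noteq> 1" using we by (metis complex_cnj_cnj complex_cnj_one)
  then have we': "(1/cnj w) * (1/cnj e) \<noteq> 1" unfolding we1 by simp
  have F1: "Ff c n m z w e = Nt c n m z w e / (1 - w*e)"
    using FN[of w e c n m z] we by (simp add: field_simps)
  have F2: "Ff c n m (1/cnj z) (1/cnj w) (1/cnj e) = Nt c n m (1/cnj z) (1/cnj w) (1/cnj e) / (1 - (1/cnj w) * (1/cnj e))"
    using FN[of "1/cnj w" "1/cnj e" c n m "1/cnj z"] we' by (simp add: field_simps)
  define X where "X = cnj (Nt c n m (1/cnj z) (1/cnj w) (1/cnj e))"
  have NX: "Nt c n m z w e = - (z^(2*n) * (w*e)^m * X)" using N_sym[OF z w e, of n m c] unfolding X_def by simp
  have cF2: "cnj (Ff c n m (1/cnj z) (1/cnj w) (1/cnj e)) = X / (1 - 1/(w*e))"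
    unfolding F2 X_def by simp
  have pw: "(w*e)^m = (w*e)^(m-1) * (w*e)"
    using m by (metis Suc_diff_le diff_Suc_1 power_Suc2)
  have alg: "- (Z * (P * u) * X) / (1 - u) = Z * P * (X / (1 - 1/u))" if "u \<noteq> 0" "u \<noteq> 1" for Z P u X :: complex
  proof -
    have "1 - 1/u = (u - 1)/u" using that by (simp add: field_simps)
    moreover have "1 - u \<noteq> 0" "u - 1 \<noteq> 0" using that by auto
    ultimately show ?thesis using that by (simp add: field_simps)
  qed
  have "w * e \<noteq> 0" using w e by auto
  then show ?thesis unfolding F1 cF2 NX pw by (rule alg) (use we in auto)
qed

lemma cont_Ff_inv: assumes "a \<noteq> 0" shows "isCont (\<lambda>x. cnj (Ff c n m z (1 / cnj x) e)) a"
proof -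
  have "isCont (\<lambda>x. 1 / cnj x) a" using assms by (intro continuous_intros) auto
  then have "isCont (\<lambda>x. Ff c n m z (1 / cnj x) e) a"
    using isCont_o2[OF _ cont_Ff_w] by blast
  then show ?thesis by (intro continuous_intros)
qed

lemma F_sym:
  fixes z w e :: complex
  assumes z: "z \<noteq> 0" and w: "w \<noteq> 0" and e: "e \<noteq> 0" and m: "m \<ge> 1"
  shows "Ff c n m z w e = z^(2*n) * (w*e)^(m-1) * cnj (Ff c n m (1/cnj z) (1/cnj w) (1/cnj e))"
proof (cases "w * e = 1")
  case False then show ?thesis using F_sym_gen assms by blast
next
  case True
  let ?g = "\<lambda>x. Ff c n m z x e - z^(2*n) * (x*e)^(m-1) * cnj (Ff c n m (1/cnj z) (1/cnj x) (1/cnj e))"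
  have "isCont ?g w"
    by (intro continuous_intros cont_Ff_w cont_Ff_inv w)
  moreover have "\<forall>\<^sub>F x in at w. ?g x = 0"
  proof -
    have "\<forall>\<^sub>F x in at w. x \<noteq> 0" by (rule eventually_neq_at_within)
    moreover have "\<forall>\<^sub>F x in at w. x \<noteq> w" by (simp add: eventually_at_filter)
    ultimately show ?thesis
    proof eventually_elim
      case (elim x)
      have "x * e \<noteq> 1"
      proof
        assume "x * e = 1"
        with True have "x * e = w * e" by simp
        with e elim show False by simp
      qed
      then show ?case using F_sym_gen[OF z elim(1) e _ m] by simp
    qed
  qed
  ultimately have "?g w = 0" by (rule zero_ext)
  then show ?thesis by simp
qed


lemma tpoly_tcoeff: "tpoly l a b d z w e = (\<Sum>k\<le>d. tcoeff l a b k z w * e^k)"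
proof -
  have "tpoly l a b d z w e = (\<Sum>i\<le>a. \<Sum>k\<le>d. \<Sum>j\<le>b. l i j k * z ^ i * w ^ j * e ^ k)"
    unfolding tpoly_def by (rule sum.cong[OF refl], rule sum.swap)
  also have "\<dots> = (\<Sum>k\<le>d. \<Sum>i\<le>a. \<Sum>j\<le>b. l i j k * z ^ i * w ^ j * e ^ k)"
    by (rule sum.swap)
  also have "\<dots> = (\<Sum>k\<le>d. tcoeff l a b k z w * e^k)"
    unfolding tcoeff_def sum_distrib_right by simp
  finally show ?thesis .
qed

definition qc :: "(nat \<Rightarrow> nat \<Rightarrow> complex) \<Rightarrow> nat \<Rightarrow> nat \<Rightarrow> complex" where
  "qc c n j = (\<Sum>i\<le>n. c i j)"

lemma P1: "bpoly c n m 1 w = (\<Sum>j\<le>m. qc c n j * w^j)"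
  unfolding bpoly_def qc_def sum_distrib_right by (simp add: sum.swap[of _ "{..n}"])

lemma Q1: "brefl c n m 1 w = (\<Sum>j\<le>m. cnj (qc c n j) * w^(m-j))"
  unfolding brefl_def qc_def sum_distrib_right cnj_sum by (simp add: sum.swap[of _ "{..n}"])

lemma Qs1: "Qs c n m 1 e = (\<Sum>j\<le>m. cnj (qc c n j) * e^j)"
  unfolding Qs_def qc_def sum_distrib_right cnj_sum by (simp add: sum.swap[of _ "{..n}"])

lemma Ps1: "Ps c n m 1 e = (\<Sum>s\<le>m. qc c n (m-s) * e^s)"
proof -
  have "Ps c n m 1 e = (\<Sum>j\<le>m. qc c n j * e^(m-j))"
    unfolding Ps_def qc_def sum_distrib_right by (simp add: sum.swap[of _ "{..n}"])
  also have "\<dots> = (\<Sum>s\<le>m. qc c n (m-s) * e^s)"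
    by (rule sum.reindex_bij_witness[where i="\<lambda>s. m - s" and j="\<lambda>s. m - s"]) auto
  finally show ?thesis .
qed

definition Ncf :: "(nat \<Rightarrow> nat \<Rightarrow> complex) \<Rightarrow> nat \<Rightarrow> nat \<Rightarrow> nat \<Rightarrow> complex \<Rightarrow> complex" where
  "Ncf c n m s w = bpoly c n m 1 w * cnj (qc c n s) - brefl c n m 1 w * qc c n (m-s)"

lemma Nt1: "Nt c n m 1 w e = (\<Sum>s\<le>m. Ncf c n m s w * e^s)"
  unfolding N_eq[symmetric] Qs1 Ps1 Ncf_def sum_distrib_left
  by (simp add: sum_subtractf[symmetric] algebra_simps)

lemma coeff_rec:
  fixes a :: "nat \<Rightarrow> complex" and N :: "nat \<Rightarrow> complex"
  assumes m: "m \<ge> 1"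
    and eq: "\<And>e. (1 - w*e) * (\<Sum>k\<le>m-1. a k * e^k) = (\<Sum>s\<le>m. N s * e^s)"
  shows "\<And>s. s < m \<Longrightarrow> a s = (\<Sum>k\<le>s. w^(s-k) * N k)"
proof -
  define A1 where "A1 s = (if s < m then a s else 0) - w * (if s = 0 then 0 else a (s-1))" for s
  have mm: "m = Suc (m-1)" using m by simp
  have split: "(\<Sum>s\<le>m. g s) = (\<Sum>s\<le>m-1. g s) + g m" for g :: "nat \<Rightarrow> complex"
    using mm by (metis sum.atMost_Suc)
  have shift: "(\<Sum>s\<le>m. g s) = g 0 + (\<Sum>s\<le>m-1. g (Suc s))" for g :: "nat \<Rightarrow> complex"
    using mm by (metis sum.atMost_Suc_shift)
  have "(\<Sum>k\<le>m-1. a k * e^k) = (\<Sum>s\<le>m. (if s < m then a s else 0) * e^s)" for e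
    unfolding split using m by (simp, intro sum.cong) auto
  moreover have "w * e * (\<Sum>k\<le>m-1. a k * e^k) = (\<Sum>s\<le>m. w * (if s = 0 then 0 else a (s-1)) * e^s)" for e
    unfolding shift by (simp add: sum_distrib_left mult_ac)
  ultimately have "(\<Sum>s\<le>m. A1 s * e^s) = (\<Sum>s\<le>m. N s * e^s)" for e
    using eq[of e] unfolding A1_def by (simp add: left_diff_distrib sum_subtractf)
  then have co: "\<And>s. s \<le> m \<Longrightarrow> A1 s = N s" using polyfun_eq_coeffs by blast
  fix s assume "s < m"
  then show "a s = (\<Sum>k\<le>s. w^(s-k) * N k)"
  proof (induction s)
    case 0 then show ?case using co[of 0] by (simp add: A1_def)
  next
    case (Suc s)
    then have "a (Suc s) - w * a s = N (Suc s)" using co[of "Suc s"] by (simp add: A1_def)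
    moreover have "a s = (\<Sum>k\<le>s. w^(s-k) * N k)" using Suc by simp
    ultimately have "a (Suc s) = N (Suc s) + w * (\<Sum>k\<le>s. w^(s-k) * N k)" by (simp add: algebra_simps)
    also have "\<dots> = (\<Sum>k\<le>Suc s. w^(Suc s-k) * N k)"
      by (simp add: sum_distrib_left mult_ac Suc_diff_le)
    finally show ?case .
  qed
qed


lemma qc0: assumes "stable c n m" shows "qc c n 0 \<noteq> 0"
proof -
  have "bpoly c n m 1 0 \<noteq> 0" using assms unfolding stable_def by simp
  moreover have "bpoly c n m 1 0 = qc c n 0"
  proof -
    have "bpoly c n m 1 0 = (\<Sum>j\<le>m. if j = 0 then qc c n j else 0)"
      unfolding P1 by (intro sum.cong refl) (simp add: power_0_left)
    then show ?thesis by (simp add: sum.delta)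
  qed
  ultimately show ?thesis by simp
qed

lemma Q1_inv: assumes "\<rho> \<noteq> 0" shows "brefl c n m 1 \<rho> = \<rho>^m * cnj (bpoly c n m 1 (1 / cnj \<rho>))"
proof -
  have "\<rho>^m * cnj (bpoly c n m 1 (1 / cnj \<rho>)) = (\<Sum>j\<le>m. cnj (qc c n j) * (\<rho>^m * (1/\<rho>)^j))"
    unfolding P1 cnj_sum sum_distrib_left by (simp add: mult_ac)
  also have "\<dots> = brefl c n m 1 \<rho>"
    unfolding Q1 by (intro sum.cong refl) (simp add: zpow_inv[OF assms])
  finally show ?thesis by simp
qed

lemma lower_zero:
  fixes u b :: "nat \<Rightarrow> complex"
  assumes b0: "b 0 \<noteq> 0" and h: "\<And>t. t < m \<Longrightarrow> (\<Sum>s<m. if t \<le> s then u s * b (s - t) else 0) = 0"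
  shows "t < m \<Longrightarrow> u t = 0"
proof (induction "m - t" arbitrary: t rule: less_induct)
  case less
  have "(\<Sum>s<m. if t \<le> s then u s * b (s - t) else 0) = (\<Sum>s<m. if s = t then u t * b 0 else 0)"
  proof (intro sum.cong refl)
    fix s assume s: "s \<in> {..<m}"
    show "(if t \<le> s then u s * b (s - t) else 0) = (if s = t then u t * b 0 else 0)"
    proof (cases "t < s")
      case True
      then have "u s = 0" using less s by auto
      then show ?thesis using True by auto
    qed auto
  qed
  then have "u t * b 0 = 0" using h[OF less(2)] less(2) by simp
  then show ?case using b0 by simp
qed

lemma kernel_indep:
  assumes m: "m \<ge> 1" and st: "stable c n m"
    and Fl: "\<And>z w e. Ff c n m z w e = tpoly l (2*n) (m-1) (m-1) z w e"
    and hyp: "\<And>w. (\<Sum>k<m. u k * tcoeff l (2*n) (m-1) k 1 w) = 0"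
  shows "k < m \<Longrightarrow> u k = 0"
proof -
  define a where "a k w = tcoeff l (2*n) (m-1) k 1 w" for k w
  have arec: "a s w = (\<Sum>k\<le>s. w^(s-k) * Ncf c n m k w)" if "s < m" for s w
  proof (rule coeff_rec[OF m _ that])
    fix e
    show "(1 - w*e) * (\<Sum>k\<le>m-1. a k w * e^k) = (\<Sum>s\<le>m. Ncf c n m s w * e^s)"
      using FN[of w e c n m 1] unfolding Fl tpoly_tcoeff Nt1 a_def .
  qed
  define qq where "qq = qc c n"
  define Bw where "Bw w = (\<Sum>s<m. \<Sum>k\<le>s. u s * cnj (qq k) * w^(s-k))" for w
  define Aw where "Aw w = (\<Sum>s<m. \<Sum>k\<le>s. u s * qq (m-k) * w^(s-k))" for w
  have PBQA: "bpoly c n m 1 w * Bw w - brefl c n m 1 w * Aw w = 0" for w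
  proof -
    have "bpoly c n m 1 w * Bw w - brefl c n m 1 w * Aw w = (\<Sum>s<m. u s * a s w)"
      unfolding Bw_def Aw_def sum_distrib_left sum_subtractf[symmetric]
      by (intro sum.cong refl) (simp add: arec Ncf_def qq_def sum_distrib_left sum_subtractf[symmetric] algebra_simps)
    also have "\<dots> = 0" using hyp[of w] unfolding a_def by simp
    finally show ?thesis .
  qed
  define pP where "pP = (\<Sum>j\<le>m. monom (qq j) j)"
  define pQ where "pQ = (\<Sum>j\<le>m. monom (cnj (qq j)) (m-j))"
  define pB where "pB = (\<Sum>s<m. \<Sum>k\<le>s. monom (u s * cnj (qq k)) (s-k))"
  define pA where "pA = (\<Sum>s<m. \<Sum>k\<le>s. monom (u s * qq (m-k)) (s-k))"
  have ppP: "poly pP w = bpoly c n m 1 w" for w unfolding pP_def P1 qq_def by (simp add: poly_sum poly_monom)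
  have ppQ: "poly pQ w = brefl c n m 1 w" for w unfolding pQ_def Q1 qq_def by (simp add: poly_sum poly_monom)
  have ppB: "poly pB w = Bw w" for w unfolding pB_def Bw_def by (simp add: poly_sum poly_monom)
  have ppA: "poly pA w = Aw w" for w unfolding pA_def Aw_def by (simp add: poly_sum poly_monom)
  have "poly (pP * pB - pQ * pA) = poly 0"
    using PBQA by (simp add: fun_eq_iff ppP ppQ ppB ppA)
  then have eqPQ: "pP * pB = pQ * pA" unfolding poly_eq_poly_eq_iff by simp
  have q0: "qq 0 \<noteq> 0" using qc0[OF st] unfolding qq_def .
  have stab1: "bpoly c n m 1 w \<noteq> 0" if "cmod w \<le> 1" for w
    using st that unfolding stable_def by simp
  have pP0: "pP \<noteq> 0"
  proof
    assume "pP = 0"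
    then have "poly pP 0 = 0" by simp
    then show False using stab1[of 0] unfolding ppP by simp
  qed
  have copr: "coprime pQ pP"
  proof (rule coprimeI)
    fix d assume dQ: "d dvd pQ" and dP: "d dvd pP"
    show "is_unit d"
    proof (rule ccontr)
      assume nu: "\<not> is_unit d"
      have d0: "d \<noteq> 0" using dP pP0 by auto
      then have "degree d \<noteq> 0" using nu is_unit_iff_degree by blast
      then have "\<not> (\<exists>a l. a \<noteq> 0 \<and> l = 0 \<and> d = pCons a l)" by auto
      then obtain \<rho> where r: "poly d \<rho> = 0" using fundamental_theorem_of_algebra_alt by blast
      from dP obtain r1 where "pP = d * r1" by (elim dvdE)
      then have rP: "bpoly c n m 1 \<rho> = 0" using r ppP[of \<rho>] by simp
      from dQ obtain r2 where "pQ = d * r2" by (elim dvdE)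
      then have rQ: "brefl c n m 1 \<rho> = 0" using r ppQ[of \<rho>] by simp
      have big: "cmod \<rho> > 1" using stab1[of \<rho>] rP by force
      then have rho0: "\<rho> \<noteq> 0" by auto
      have "cmod (1 / cnj \<rho>) = 1 / cmod \<rho>" by (simp add: norm_divide)
      also have "\<dots> \<le> 1" using big by (simp add: divide_le_eq)
      finally have "cmod (1 / cnj \<rho>) \<le> 1" .
      then have "bpoly c n m 1 (1 / cnj \<rho>) \<noteq> 0" by (rule stab1)
      then have "brefl c n m 1 \<rho> \<noteq> 0" unfolding Q1_inv[OF rho0] using rho0 by simp
      then show False using rQ by simp
    qed
  qed
  have "pQ dvd pB * pP" using eqPQ by (simp add: mult.commute)
  then have dvdB: "pQ dvd pB" using copr by (simp add: coprime_dvd_mult_left_iff)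
  have cB: "coeff pB t = (\<Sum>s<m. if t \<le> s then u s * cnj (qq (s - t)) else 0)" for t
    unfolding pB_def coeff_sum coeff_monom
  proof (intro sum.cong refl)
    fix s assume "s \<in> {..<m}"
    have "(\<Sum>k\<le>s. if s - k = t then u s * cnj (qq k) else 0) = (\<Sum>k\<le>s. if k = s - t \<and> t \<le> s then u s * cnj (qq k) else 0)"
      by (intro sum.cong refl) auto
    also have "\<dots> = (if t \<le> s then u s * cnj (qq (s - t)) else 0)"
      by (cases "t \<le> s") (simp_all add: sum.delta)
    finally show "(\<Sum>k\<le>s. if s - k = t then u s * cnj (qq k) else 0) = (if t \<le> s then u s * cnj (qq (s - t)) else 0)" .
  qed
  have cQ: "coeff pQ m = cnj (qq 0)"
  proof -
    have "coeff pQ m = (\<Sum>j\<le>m. if j = 0 then cnj (qq j) else 0)"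
      unfolding pQ_def coeff_sum coeff_monom by (intro sum.cong refl) auto
    then show ?thesis by (simp add: sum.delta)
  qed
  have "pB = 0"
  proof (rule ccontr)
    assume nz: "pB \<noteq> 0"
    have "degree pQ \<le> degree pB" using dvd_imp_degree_le[OF dvdB nz] .
    moreover have "m \<le> degree pQ" using cQ q0 by (intro le_degree) simp
    moreover have "degree pB \<le> m - 1"
      by (rule degree_le) (use m in \<open>auto simp: cB intro!: sum.neutral\<close>)
    ultimately show False using m by simp
  qed
  then have "\<And>t. t < m \<Longrightarrow> (\<Sum>s<m. if t \<le> s then u s * cnj (qq (s - t)) else 0) = 0"
    using cB by (metis coeff_0)
  then show "k < m \<Longrightarrow> u k = 0"
    using lower_zero[of "\<lambda>j. cnj (qq j)" m u k] q0 by simp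
qed


lemma vander:
  fixes \<mu> :: "nat \<Rightarrow> complex"
  assumes h: "\<And>k. k < m \<Longrightarrow> (\<Sum>t<m. \<mu> t * of_nat t ^ k) = 0" and s: "s < m"
  shows "\<mu> s = 0"
proof -
  define S where "S = {..<m} - {s}"
  define \<pi> where "\<pi> = (\<Prod>t\<in>S. [:- of_nat t, 1:] :: complex poly)"
  have fS: "finite S" unfolding S_def by simp
  have "degree \<pi> \<le> sum (degree \<circ> (\<lambda>t. [:- of_nat t, 1:] :: complex poly)) S"
    unfolding \<pi>_def by (rule degree_prod_sum_le[OF fS])
  also have "\<dots> = card S" by simp
  also have "\<dots> = m - 1" unfolding S_def using s by simp
  finally have dg: "degree \<pi> \<le> m - 1" .
  have pa: "poly \<pi> x = (\<Sum>k\<le>m-1. coeff \<pi> k * x^k)" for x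
  proof -
    have "poly \<pi> x = (\<Sum>k\<le>degree \<pi>. coeff \<pi> k * x^k)" by (rule poly_altdef)
    also have "\<dots> = (\<Sum>k\<le>m-1. coeff \<pi> k * x^k)"
      by (rule sum.mono_neutral_left) (use dg in \<open>auto simp: coeff_eq_0\<close>)
    finally show ?thesis .
  qed
  have "(\<Sum>t<m. \<mu> t * poly \<pi> (of_nat t)) = (\<Sum>k\<le>m-1. coeff \<pi> k * (\<Sum>t<m. \<mu> t * of_nat t ^ k))"
    unfolding pa sum_distrib_left by (subst sum.swap) (simp add: mult_ac)
  also have "\<dots> = 0" using h s by (intro sum.neutral) auto
  finally have z: "(\<Sum>t<m. \<mu> t * poly \<pi> (of_nat t)) = 0" .
  have "(\<Sum>t<m. \<mu> t * poly \<pi> (of_nat t)) = (\<Sum>t<m. if t = s then \<mu> s * poly \<pi> (of_nat s) else 0)"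
  proof (intro sum.cong refl)
    fix t assume t: "t \<in> {..<m}"
    show "\<mu> t * poly \<pi> (of_nat t) = (if t = s then \<mu> s * poly \<pi> (of_nat s) else 0)"
    proof (cases "t = s")
      case False
      then have "t \<in> S" using t unfolding S_def by auto
      then have "poly \<pi> (of_nat t) = 0" unfolding \<pi>_def poly_prod using fS
        by (intro prod_zero) (auto intro!: bexI[of _ t])
      then show ?thesis using False by simp
    qed simp
  qed
  also have "\<dots> = \<mu> s * poly \<pi> (of_nat s)" using s by (simp add: sum.delta)
  finally have "\<mu> s * poly \<pi> (of_nat s) = 0" using z by simp
  moreover have "poly \<pi> (of_nat s) \<noteq> 0"
    unfolding \<pi>_def poly_prod using fS by (subst prod_zero_iff) (auto simp: S_def)
  ultimately show ?thesis by simp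
qed

lemma vs_fscale: "vector_space (fscale :: complex \<Rightarrow> ('a \<Rightarrow> complex) \<Rightarrow> _)"
  by unfold_locales (auto simp: fscale_def fun_eq_iff algebra_simps)

lemma sum_app: "(sum f A) x = (\<Sum>a\<in>A. f a x)"
  by (induction A rule: infinite_finite_induct) auto

lemma delta_helper: "(a::nat) < m \<Longrightarrow> (\<Sum>t<m. if t = a then (x::'b::comm_monoid_add) else 0) = x"
  by simp

lemma indep_family:
  fixes v :: "nat \<Rightarrow> 'b::ab_group_add"
  assumes vs: "vector_space (scale :: complex \<Rightarrow> 'b \<Rightarrow> 'b)"
    and h: "\<And>\<mu>. (\<Sum>t<m. scale (\<mu> t) (v t)) = 0 \<Longrightarrow> \<forall>t<m. \<mu> t = 0"
  shows "inj_on v {..<m} \<and> \<not> module.dependent scale (v ` {..<m})"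
proof -
  interpret vs: vector_space scale by (rule vs)
  have inj: "inj_on v {..<m}"
  proof (rule inj_onI)
    fix a b assume a: "a \<in> {..<m}" and b: "b \<in> {..<m}" and eq: "v a = v b"
    show "a = b"
    proof (rule ccontr)
      assume ne: "a \<noteq> b"
      define \<mu> where "\<mu> t = (if t = a then 1 else if t = b then -1 else 0 :: complex)" for t
      have "(\<Sum>t<m. scale (\<mu> t) (v t)) = (\<Sum>t<m. (if t = a then v a else 0) + (if t = b then - v b else 0))"
        by (intro sum.cong refl) (use ne in \<open>auto simp: \<mu>_def vs.scale_minus_left\<close>)
      also have "\<dots> = 0"
      proof -
        have 1: "(\<Sum>t<m. (if t = a then v a else 0)) = v a" using a by (intro delta_helper) simp
        have 2: "(\<Sum>t<m. (if t = b then - v b else 0)) = - v b" using b by (intro delta_helper) simp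
        have "(\<Sum>t<m. (if t = a then v a else 0) + (if t = b then - v b else 0)) = v a + - v b"
          unfolding sum.distrib 1 2 ..
        then show ?thesis using eq by simp
      qed
      finally have "\<mu> a = 0" using h a by blast
      then show False by (simp add: \<mu>_def)
    qed
  qed
  have "\<not> vs.dependent (v ` {..<m})"
    unfolding vs.dependent_finite[OF finite_imageI[OF finite_lessThan]]
  proof (intro notI, elim exE conjE bexE)
    fix c x assume c: "(\<Sum>x\<in>v ` {..<m}. scale (c x) x) = 0" and x: "x \<in> v ` {..<m}" and cx: "c x \<noteq> 0"
    have "(\<Sum>t<m. scale (c (v t)) (v t)) = 0" using c by (simp add: sum.reindex[OF inj])
    then have "\<forall>t<m. c (v t) = 0" by (rule h)
    then show False using x cx by auto
  qed
  with inj show ?thesis by simp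
qed


lemma tcoeff_sym:
  assumes m: "m \<ge> 1" and Fl: "\<And>z w e. Ff c n m z w e = tpoly l (2*n) (m-1) (m-1) z w e"
    and z: "z \<noteq> 0" and w: "w \<noteq> 0" and k: "k \<le> m - 1"
  shows "tcoeff l (2*n) (m-1) k z w = z^(2*n) * w^(m-1) * cnj (tcoeff l (2*n) (m-1) (m-k-1) (1 / cnj z) (1 / cnj w))"
proof -
  define T where "T j = tcoeff l (2*n) (m-1) j z w" for j
  define R where "R j = z^(2*n) * w^(m-1) * cnj (tcoeff l (2*n) (m-1) j (1 / cnj z) (1 / cnj w))" for j
  have eq: "(\<Sum>j\<le>m-1. (T j - R (m-1-j)) * e^j) = 0" if e: "e \<noteq> 0" for e
  proof -
    have "(\<Sum>j\<le>m-1. T j * e^j) = Ff c n m z w e" unfolding Fl tpoly_tcoeff T_def ..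
    also have "\<dots> = z^(2*n) * (w*e)^(m-1) * cnj (Ff c n m (1/cnj z) (1/cnj w) (1/cnj e))"
      by (rule F_sym[OF z w e m])
    also have "\<dots> = (\<Sum>j\<le>m-1. R j * (e^(m-1) * (1/e)^j))"
      unfolding Fl tpoly_tcoeff cnj_sum sum_distrib_left R_def
      by (intro sum.cong refl) (simp add: power_mult_distrib mult_ac)
    also have "\<dots> = (\<Sum>j\<le>m-1. R j * e^(m-1-j))"
      by (intro sum.cong refl) (simp add: zpow_inv[OF e])
    also have "\<dots> = (\<Sum>j\<le>m-1. R (m-1-j) * e^j)"
      by (rule sum.reindex_bij_witness[where i="\<lambda>s. m - 1 - s" and j="\<lambda>s. m - 1 - s"]) (use m in auto)
    finally show ?thesis by (simp add: left_diff_distrib sum_subtractf)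
  qed
  have "\<forall>j\<le>m-1. T j - R (m-1-j) = 0"
  proof (rule ccontr)
    assume "\<not> ?thesis"
    then obtain j where "j \<le> m-1" "T j - R (m-1-j) \<noteq> 0" by auto
    then have fin: "finite {e. (\<Sum>i\<le>m-1. (T i - R (m-1-i)) * e^i) = 0}"
      by (intro polyfun_roots_finite) 
    have "UNIV - {0} \<subseteq> {e. (\<Sum>i\<le>m-1. (T i - R (m-1-i)) * e^i) = 0}" using eq by auto
    then have "finite (UNIV - {0::complex})" using fin finite_subset by blast
    then have "finite (UNIV :: complex set)" by simp
    then show False using infinite_UNIV_char_0 by blast
  qed
  then have "T k = R (m-1-k)" using k by auto
  moreover have "m - k - 1 = m - 1 - k" by simp
  ultimately show ?thesis unfolding T_def R_def by simp
qed

theorem mainTheorem2: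
  fixes c :: "nat \<Rightarrow> nat \<Rightarrow> complex" and n m :: nat
  assumes "n \<ge> 1" and "m \<ge> 1"
    and "has_bidegree c n m" and "stable c n m"
  shows "\<exists>l :: nat \<Rightarrow> nat \<Rightarrow> nat \<Rightarrow> complex.
     (\<forall>z w \<eta>. z \<noteq> 0 \<longrightarrow> w * cnj \<eta> \<noteq> 1 \<longrightarrow>
         Lfun c n m z w \<eta> = tpoly l (2*n) (m-1) (m-1) z w (cnj \<eta>))
   \<and> vector_space.dim (fscale :: complex \<Rightarrow> (complex \<times> complex \<Rightarrow> complex) \<Rightarrow> _)
       (range (\<lambda>\<eta>. \<lambda>(z, w). tpoly l (2*n) (m-1) (m-1) z w (cnj \<eta>))) = m
   \<and> (\<forall>z w \<eta>. z \<noteq> 0 \<longrightarrow> w \<noteq> 0 \<longrightarrow> \<eta> \<noteq> 0 \<longrightarrow>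
         tpoly l (2*n) (m-1) (m-1) z w (cnj \<eta>) =
         z ^ (2*n) * (w * cnj \<eta>) ^ (m-1) *
         cnj (tpoly l (2*n) (m-1) (m-1) (1 / cnj z) (1 / cnj w) (cnj (1 / cnj \<eta>))))
   \<and> (\<forall>k\<le>m-1. \<forall>z w. z \<noteq> 0 \<longrightarrow> w \<noteq> 0 \<longrightarrow>
         tcoeff l (2*n) (m-1) k z w =
         z ^ (2*n) * w ^ (m-1) * cnj (tcoeff l (2*n) (m-1) (m-k-1) (1 / cnj z) (1 / cnj w)))
   \<and> (\<exists>A B :: nat \<Rightarrow> nat \<Rightarrow> nat \<Rightarrow> complex. \<forall>z w \<eta>.
         tpoly l (2*n) (m-1) (m-1) z w (cnj \<eta>) =
         bpoly c n m z w * tpoly A n (m-1) (m-1) z w (cnj \<eta>)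
         + brefl c n m z w * tpoly B n (m-1) (m-1) z w (cnj \<eta>))"
proof -
  have m: "m \<ge> 1" using assms(2) .
  obtain l where Fl: "\<And>z w e. Ff c n m z w e = tpoly l (2*n) (m-1) (m-1) z w e"
    using tp_Ff[of n m c] unfolding tp_def by blast
  obtain A' where Al: "\<And>z w e. Af c n m z w e = tpoly A' n (m-1) (m-1) z w e"
    using tp_Af[of n m c] unfolding tp_def by blast
  obtain B' where Bl: "\<And>z w e. Bf c n m z w e = tpoly B' n (m-1) (m-1) z w e"
    using tp_Bf[of n m c] unfolding tp_def by blast
  interpret fs: vector_space "fscale :: complex \<Rightarrow> (complex \<times> complex \<Rightarrow> complex) \<Rightarrow> _"
    by (rule vs_fscale)
  have mm: "{..m-1} = {..<m}" "{..m - Suc 0} = {..<m}" using m by auto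
  define V where "V = range (\<lambda>\<eta>. \<lambda>(z, w). tpoly l (2*n) (m-1) (m-1) z w (cnj \<eta>))"
  define \<alpha> where "\<alpha> k = (\<lambda>(z, w). tcoeff l (2*n) (m-1) k z w)" for k
  define Bs where "Bs = \<alpha> ` {..<m}"
  have sub: "V \<subseteq> fs.span Bs"
  proof
    fix x assume "x \<in> V"
    then obtain \<eta> where x: "x = (\<lambda>(z, w). tpoly l (2*n) (m-1) (m-1) z w (cnj \<eta>))" unfolding V_def by auto
    have "x = (\<Sum>k<m. fscale (cnj \<eta> ^ k) (\<alpha> k))"
      unfolding x by (auto simp: fun_eq_iff sum_app fscale_def \<alpha>_def tpoly_tcoeff mm mult.commute)
    also have "\<dots> \<in> fs.span Bs"
      by (intro fs.span_sum fs.span_scale fs.span_base) (auto simp: Bs_def)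
    finally show "x \<in> fs.span Bs" .
  qed
  have up: "fs.dim V \<le> m"
  proof -
    have "fs.dim V \<le> card Bs" by (rule fs.dim_le_card[OF sub]) (simp add: Bs_def)
    also have "\<dots> \<le> m" unfolding Bs_def using card_image_le[of "{..<m}" \<alpha>] by simp
    finally show ?thesis .
  qed
  define g where "g t = (\<lambda>(z, w). tpoly l (2*n) (m-1) (m-1) z w (of_nat t))" for t :: nat
  have fam: "\<forall>t<m. \<mu> t = 0" if h: "(\<Sum>t<m. fscale (\<mu> t) (g t)) = 0" for \<mu>
  proof -
    define u where "u k = (\<Sum>t<m. \<mu> t * of_nat t ^ k)" for k
    have "(\<Sum>k<m. u k * tcoeff l (2*n) (m-1) k 1 w) = 0" for w
    proof -
      have "(\<Sum>t<m. fscale (\<mu> t) (g t)) (1, w) = 0" using h by simp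
      then have "(\<Sum>t<m. \<mu> t * (\<Sum>k<m. tcoeff l (2*n) (m-1) k 1 w * of_nat t ^ k)) = 0"
        by (simp add: sum_app fscale_def g_def tpoly_tcoeff mm)
      then show ?thesis
        unfolding u_def sum_distrib_left sum_distrib_right
        by (subst sum.swap) (simp add: mult_ac)
    qed
    then have "\<And>k. k < m \<Longrightarrow> u k = 0" using kernel_indep[OF m assms(4) Fl] by blast
    then show ?thesis using vander unfolding u_def by blast
  qed
  have ind: "inj_on g {..<m} \<and> \<not> fs.dependent (g ` {..<m})"
    by (rule indep_family[OF vs_fscale]) (use fam in blast)
  have CV: "g ` {..<m} \<subseteq> V"
  proof
    fix x assume "x \<in> g ` {..<m}"
    then obtain t where "x = g t" by auto
    moreover have "g t = (\<lambda>(z, w). tpoly l (2*n) (m-1) (m-1) z w (cnj (of_nat t)))"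
      unfolding g_def by simp
    ultimately show "x \<in> V" unfolding V_def by blast
  qed
  obtain B where B: "B \<subseteq> V" "\<not> fs.dependent B" "V \<subseteq> fs.span B" "card B = fs.dim V"
    using fs.basis_exists by blast
  have finB: "finite B"
    using fs.independent_span_bound[of Bs B] B(1,2) sub by (auto simp: Bs_def)
  have "card (g ` {..<m}) \<le> card B"
    using fs.independent_span_bound[OF finB, of "g ` {..<m}"] ind CV B(3) by auto
  moreover have "card (g ` {..<m}) = m" using ind card_image by fastforce
  ultimately have lo: "m \<le> fs.dim V" using B(4) by simp
  have dimV: "fs.dim V = m" using up lo by simp
  show ?thesis
  proof (rule exI[of _ l], intro conjI allI impI)
    fix z w \<eta> :: complex assume "z \<noteq> 0" "w * cnj \<eta> \<noteq> 1"
    then show "Lfun c n m z w \<eta> = tpoly l (2*n) (m-1) (m-1) z w (cnj \<eta>)"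
      using L_eq Fl by metis
  next
    show "vector_space.dim (fscale :: complex \<Rightarrow> (complex \<times> complex \<Rightarrow> complex) \<Rightarrow> _)
       (range (\<lambda>\<eta>. \<lambda>(z, w). tpoly l (2*n) (m-1) (m-1) z w (cnj \<eta>))) = m"
      using dimV unfolding V_def .
  next
    fix z w \<eta> :: complex assume z: "z \<noteq> 0" and w: "w \<noteq> 0" and e: "\<eta> \<noteq> 0"
    have "cnj \<eta> \<noteq> 0" using e by simp
    from F_sym[OF z w this m, of c n]
    show "tpoly l (2*n) (m-1) (m-1) z w (cnj \<eta>) =
         z ^ (2*n) * (w * cnj \<eta>) ^ (m-1) *
         cnj (tpoly l (2*n) (m-1) (m-1) (1 / cnj z) (1 / cnj w) (cnj (1 / cnj \<eta>)))"
      unfolding Fl by simp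
  next
    fix k :: nat and z w :: complex assume "k \<le> m - 1" "z \<noteq> 0" "w \<noteq> 0"
    then show "tcoeff l (2*n) (m-1) k z w =
         z ^ (2*n) * w ^ (m-1) * cnj (tcoeff l (2*n) (m-1) (m-k-1) (1 / cnj z) (1 / cnj w))"
      using tcoeff_sym[OF m Fl] by blast
  next
    show "\<exists>A B :: nat \<Rightarrow> nat \<Rightarrow> nat \<Rightarrow> complex. \<forall>z w \<eta>.
         tpoly l (2*n) (m-1) (m-1) z w (cnj \<eta>) =
         bpoly c n m z w * tpoly A n (m-1) (m-1) z w (cnj \<eta>)
         + brefl c n m z w * tpoly B n (m-1) (m-1) z w (cnj \<eta>)"
      apply (rule exI[of _ A'], rule exI[of _ B'], intro allI)
      unfolding Fl[symmetric] Al[symmetric] Bl[symmetric] by (rule PAQB)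
  qed
qed

end
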